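(* Let $(\mathcal Q,d)$ be a separable Hadamard space, $Y$ a $\mathcal Q$-valued random variable, $o\in\mathcal Q$, and $\tau\in\mathcal S_0^+$ with $\mathbb E[\tau'(d(Y,o))]<\infty$. Assume the support of (the distribution of) $Y$ is convex. Then the $\tau$-Fréchet mean of $Y$, i.e. the minimizer of $q\mapsto\mathbb E[\tau(d(Y,q))-\tau(d(Y,o))]$, is unique.
   Context: A Hadamard space is a complete metric space $(\mathcal Q,d)$ such that for all $y_0,y_1$ there is $m$ with $\frac12 d(y_0,q)^2+\frac12 d(y_1,q)^2-\frac14 d(y_0,y_1)^2\ge d(q,m)^2$ for all $q$; any two distinct points are joined by a unique geodesic, and a set is convex if it contains the geodesic between any two of its points. The support of $Y$ is the smallest closed set $C$ with $\mathbb P(Y\in C)=1$. $\mathcal S_0^+$ is the set of nondecreasing convex $\tau:[0,\infty)\to\mathbb R$, differentiable on $(0,\infty)$ with concave derivative $\tau'$ (with $\tau'(0):=\lim_{x\searrow0}\tau'(x)$), such that $\tau(0)=0$ and $\tau'(x)>0$ for $x>0$. *)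

theory Defs
  imports "HOL-Probability.Probability"
begin

text \<open>Hadamard space condition (completeness is imposed via the type class complete_space).\<close>
definition hadamard_space :: "'a::metric_space itself \<Rightarrow> bool" where
  "hadamard_space _ \<longleftrightarrow>
     (\<forall>y0 y1::'a. \<exists>m. \<forall>q.
        (1/2) * (dist y0 q)^2 + (1/2) * (dist y1 q)^2 - (1/4) * (dist y0 y1)^2 \<ge> (dist q m)^2)"

definition separable_space :: "'a::metric_space itself \<Rightarrow> bool" where
  "separable_space _ \<longleftrightarrow> (\<exists>D::'a set. countable D \<and> closure D = UNIV)"

definition geodesic_between :: "(real \<Rightarrow> 'a::metric_space) \<Rightarrow> 'a \<Rightarrow> 'a \<Rightarrow> bool" where
  "geodesic_between g x y \<longleftrightarrow> g 0 = x \<and> g 1 = y \<and>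
     (\<forall>s\<in>{0..1}. \<forall>t\<in>{0..1}. dist (g s) (g t) = \<bar>s - t\<bar> * dist x y)"

definition geodesically_convex :: "'a::metric_space set \<Rightarrow> bool" where
  "geodesically_convex C \<longleftrightarrow>
     (\<forall>x\<in>C. \<forall>y\<in>C. \<forall>g. geodesic_between g x y \<longrightarrow> g ` {0..1} \<subseteq> C)"

text \<open>Support of a random variable Y: the intersection of all closed sets of full probability
  (the smallest closed set of full probability, in separable spaces).\<close>
definition rv_support :: "'b measure \<Rightarrow> ('b \<Rightarrow> 'a::metric_space) \<Rightarrow> 'a set" where
  "rv_support M Y = \<Inter>{C. closed C \<and> measure M {\<omega>\<in>space M. Y \<omega> \<in> C} = 1}"

definition tau_deriv :: "(real \<Rightarrow> real) \<Rightarrow> real \<Rightarrow> real" where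
  "tau_deriv \<tau> x = (if x > 0 then deriv \<tau> x else Lim (at_right 0) (deriv \<tau>))"

definition S0plus :: "(real \<Rightarrow> real) set" where
  "S0plus = {\<tau>. mono_on {0..} \<tau> \<and> convex_on {0..} \<tau> \<and>
      (\<forall>x>0. \<tau> differentiable at x) \<and> concave_on {0<..} (deriv \<tau>) \<and>
      (\<exists>l. (deriv \<tau> \<longlongrightarrow> l) (at_right 0)) \<and>
      \<tau> 0 = 0 \<and> (\<forall>x>0. deriv \<tau> x > 0)}"

definition frechet_obj :: "'b measure \<Rightarrow> ('b \<Rightarrow> 'a::metric_space) \<Rightarrow> (real \<Rightarrow> real) \<Rightarrow> 'a \<Rightarrow> 'a \<Rightarrow> real" where
  "frechet_obj M Y \<tau> o' q = (\<integral>\<omega>. \<tau> (dist (Y \<omega>) q) - \<tau> (dist (Y \<omega>) o') \<partial>M)"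

definition is_tau_frechet_mean :: "'b measure \<Rightarrow> ('b \<Rightarrow> 'a::metric_space) \<Rightarrow> (real \<Rightarrow> real) \<Rightarrow> 'a \<Rightarrow> 'a \<Rightarrow> bool" where
  "is_tau_frechet_mean M Y \<tau> o' m \<longleftrightarrow> (\<forall>q. frechet_obj M Y \<tau> o' m \<le> frechet_obj M Y \<tau> o' q)"

end

theory Submission
  imports Defs
begin


definition mid :: "'a::metric_space \<Rightarrow> 'a \<Rightarrow> 'a" where
  "mid x y = (SOME m. dist x m \<le> dist x y / 2 \<and> dist y m \<le> dist x y / 2)"

lemma mid_ex:
  fixes x y :: "'a::metric_space"
  assumes "hadamard_space TYPE('a)"
  shows "\<exists>m. dist x m \<le> dist x y / 2 \<and> dist y m \<le> dist x y / 2"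
proof -
  obtain m where m: "\<And>q. (1/2) * (dist x q)^2 + (1/2) * (dist y q)^2 - (1/4) * (dist x y)^2 \<ge> (dist q m)^2"
    using assms unfolding hadamard_space_def by blast
  have "(dist x m)^2 \<le> (dist x y / 2)^2" using m[of x] by (simp add: dist_commute power_divide)
  hence 1: "dist x m \<le> dist x y / 2" by (rule power2_le_imp_le) simp
  have "(dist y m)^2 \<le> (dist x y / 2)^2" using m[of y] by (simp add: dist_commute power_divide)
  hence 2: "dist y m \<le> dist x y / 2" by (rule power2_le_imp_le) simp
  show ?thesis using 1 2 by blast
qed

lemma mid_prop:
  fixes x y :: "'a::metric_space"
  assumes "hadamard_space TYPE('a)"
  shows "dist x (mid x y) \<le> dist x y / 2" "dist y (mid x y) \<le> dist x y / 2"
  using someI_ex[OF mid_ex[OF assms, of x y]] unfolding mid_def by auto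

fun hseq :: "'a::metric_space \<Rightarrow> 'a \<Rightarrow> nat \<Rightarrow> nat \<Rightarrow> 'a" where
  "hseq x y 0 k = (if k = 0 then x else y)"
| "hseq x y (Suc n) k = (if even k then hseq x y n (k div 2)
      else mid (hseq x y n (k div 2)) (hseq x y n (k div 2 + 1)))"

lemma hseq_step:
  fixes x y :: "'a::metric_space"
  assumes H: "hadamard_space TYPE('a)"
  shows "k < 2^n \<Longrightarrow> dist (hseq x y n k) (hseq x y n (Suc k)) \<le> dist x y / 2^n"
proof (induction n arbitrary: k)
  case 0
  then show ?case by simp
next
  case (Suc n)
  show ?case
  proof (cases "even k")
    case True
    then obtain j where j: "k = 2*j" by blast
    have jl: "j < 2^n" using Suc.prems j by simp
    have "dist (hseq x y (Suc n) k) (hseq x y (Suc n) (Suc k))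
       = dist (hseq x y n j) (mid (hseq x y n j) (hseq x y n (j+1)))"
      using j by simp
    also have "\<dots> \<le> dist (hseq x y n j) (hseq x y n (Suc j)) / 2" using mid_prop(1)[OF H] by simp
    also have "\<dots> \<le> (dist x y / 2^n) / 2" using Suc.IH[OF jl] by simp
    finally show ?thesis by simp
  next
    case False
    then obtain j where j: "k = 2*j+1" using oddE by blast
    have jl: "j < 2^n" using Suc.prems j by simp
    have e: "Suc k = 2 * (j+1)" using j by simp
    have "dist (hseq x y (Suc n) k) (hseq x y (Suc n) (Suc k))
       = dist (mid (hseq x y n j) (hseq x y n (j+1))) (hseq x y n (j+1))"
      using j e by (simp del: mult_Suc_right)
    also have "\<dots> \<le> dist (hseq x y n j) (hseq x y n (Suc j)) / 2"
      using mid_prop(2)[OF H, where x="hseq x y n j" and y="hseq x y n (j+1)"]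
        dist_commute[of "mid (hseq x y n j) (hseq x y n (j+1))" "hseq x y n (j+1)"] by simp
    also have "\<dots> \<le> (dist x y / 2^n) / 2" using Suc.IH[OF jl] by simp
    finally show ?thesis by simp
  qed
qed

lemma hseq_le:
  fixes x y :: "'a::metric_space"
  assumes H: "hadamard_space TYPE('a)"
  shows "i \<le> j \<Longrightarrow> j \<le> 2^n \<Longrightarrow> dist (hseq x y n i) (hseq x y n j) \<le> real (j - i) * dist x y / 2^n"
proof (induction j)
  case 0
  then show ?case by simp
next
  case (Suc j)
  show ?case
  proof (cases "i = Suc j")
    case True then show ?thesis by simp
  next
    case False
    hence ij: "i \<le> j" using Suc.prems by simp
    have "dist (hseq x y n i) (hseq x y n (Suc j)) \<le> dist (hseq x y n i) (hseq x y n j) + dist (hseq x y n j) (hseq x y n (Suc j))"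
      by (rule dist_triangle)
    also have "\<dots> \<le> real (j - i) * dist x y / 2^n + dist x y / 2^n"
      using Suc.IH[OF ij] Suc.prems hseq_step[OF H, of j n x y] by (intro add_mono) auto
    also have "\<dots> = real (Suc j - i) * dist x y / 2^n" using ij
      by (simp add: of_nat_diff Suc_diff_le field_simps)
    finally show ?thesis .
  qed
qed

lemma hseq_lift: "hseq x y (n + j) (m * 2^j) = hseq x y n m"
  by (induction j) (auto simp: mult.assoc[symmetric])

lemma hseq_0: "hseq x y n 0 = x"
  by (induction n) auto

lemma hseq_top: "hseq x y n (2^n) = y"
  by (induction n) auto

lemma hseq_dist_gen:
  fixes x y :: "'a::metric_space"
  assumes H: "hadamard_space TYPE('a)" and mk: "m \<le> 2^k" and mk': "m' \<le> 2^k'"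
  shows "dist (hseq x y k m) (hseq x y k' m') \<le> \<bar>real m / 2^k - real m' / 2^k'\<bar> * dist x y"
proof -
  define N where "N = k + k'"
  define a where "a = m * 2^k'"
  define b where "b = m' * 2^k"
  have ha: "hseq x y k m = hseq x y N a" unfolding N_def a_def by (simp add: hseq_lift)
  have hb: "hseq x y k' m' = hseq x y N b" unfolding N_def b_def
    using hseq_lift[of x y k' k m'] by (simp add: add.commute)
  have aN: "a \<le> 2^N" unfolding a_def N_def using mk by (simp add: power_add)
  have bN: "b \<le> 2^N" unfolding b_def N_def using mk' by (simp add: power_add)
  have eq: "\<bar>real m / 2^k - real m' / 2^k'\<bar> = \<bar>real a - real b\<bar> / 2^N"
    unfolding a_def b_def N_def by (simp add: power_add field_simps)
  show ?thesis
  proof (cases "a \<le> b")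
    case True
    have "dist (hseq x y N a) (hseq x y N b) \<le> real (b - a) * dist x y / 2^N"
      by (rule hseq_le[OF H True bN])
    also have "\<dots> = \<bar>real a - real b\<bar> / 2^N * dist x y" using True by (simp add: of_nat_diff)
    finally show ?thesis using ha hb eq by simp
  next
    case False
    have "dist (hseq x y N b) (hseq x y N a) \<le> real (a - b) * dist x y / 2^N"
      using False aN by (intro hseq_le[OF H]) auto
    also have "\<dots> = \<bar>real a - real b\<bar> / 2^N * dist x y" using False by (simp add: of_nat_diff)
    finally show ?thesis using ha hb eq by (simp add: dist_commute)
  qed
qed

definition dyS :: "real set" where "dyS = {t. \<exists>k m. m \<le> (2::nat)^k \<and> t = real m / 2^k}"

definition dyf :: "'a::metric_space \<Rightarrow> 'a \<Rightarrow> real \<Rightarrow> 'a" where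
  "dyf x y t = (SOME p. \<exists>k m. m \<le> (2::nat)^k \<and> t = real m / 2^k \<and> p = hseq x y k m)"

lemma dyf_eq:
  fixes x y :: "'a::metric_space"
  assumes H: "hadamard_space TYPE('a)" and mk: "m \<le> 2^k"
  shows "dyf x y (real m / 2^k) = hseq x y k m"
proof -
  have "\<exists>p. \<exists>k' m'. m' \<le> (2::nat)^k' \<and> real m / 2^k = real m' / 2^k' \<and> p = hseq x y k' m'"
    using mk by blast
  from someI_ex[OF this] obtain k' m' where km: "m' \<le> (2::nat)^k'" "real m / 2^k = real m' / 2^k'"
    and p: "dyf x y (real m / 2^k) = hseq x y k' m'"
    unfolding dyf_def by blast
  have "dist (hseq x y k' m') (hseq x y k m) \<le> 0"
    using hseq_dist_gen[OF H km(1) mk, of x y] km(2) by simp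
  then show ?thesis using p by simp
qed

lemma closure_dyS: "closure dyS = {0..1}"
proof -
  have "dyS = {0..1} \<inter> (\<Union>k m. {of_nat m / 2^k})"
  proof (intro set_eqI iffI)
    fix t :: real assume "t \<in> dyS"
    then obtain k m where "m \<le> (2::nat)^k" "t = real m / 2^k" unfolding dyS_def by blast
    moreover have "real m \<le> 2^k" using \<open>m \<le> 2^k\<close> by (metis of_nat_le_iff of_nat_numeral of_nat_power)
    ultimately show "t \<in> {0..1} \<inter> (\<Union>k m. {of_nat m / 2^k})" by auto
  next
    fix t :: real assume "t \<in> {0..1} \<inter> (\<Union>k m. {of_nat m / 2^k})"
    then obtain k m where t: "t = real m / 2^k" "t \<le> 1" by auto
    hence "real m \<le> 2^k" by (simp add: divide_le_eq)
    hence "m \<le> 2^k" by (metis of_nat_le_iff of_nat_numeral of_nat_power)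
    thus "t \<in> dyS" unfolding dyS_def using t by blast
  qed
  moreover have "closure ({0..1::real} \<inter> (\<Union>k m. {of_nat m / 2^k})) = closure {0..1}"
    by (rule closure_dyadic_rationals_in_convex_set_pos_1) auto
  ultimately show ?thesis by simp
qed

lemma geodesic_exists:
  fixes x y :: "'a::complete_space"
  assumes H: "hadamard_space TYPE('a)"
  shows "\<exists>g. geodesic_between g x y"
proof -
  let ?D = "dist x y"
  have lip: "?D-lipschitz_on dyS (dyf x y)"
  proof (rule lipschitz_onI)
    fix s t assume "s \<in> dyS" "t \<in> dyS"
    then obtain k m k' m' where "m \<le> (2::nat)^k" "s = real m / 2^k" "m' \<le> (2::nat)^k'" "t = real m' / 2^k'"
      unfolding dyS_def by blast
    then show "dist (dyf x y s) (dyf x y t) \<le> ?D * dist s t"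
      using hseq_dist_gen[OF H, of m k m' k' x y] dyf_eq[OF H] by (simp add: dist_real_def mult.commute)
  qed simp
  obtain g where g: "?D-lipschitz_on (closure dyS) g" "\<forall>t\<in>dyS. g t = dyf x y t"
    using lipschitz_extend_closure[OF lip] by blast
  have g0: "g 0 = x"
  proof -
    have "(0::real) \<in> dyS" unfolding dyS_def by force
    hence "g 0 = dyf x y (real 0 / 2^0)" using g(2) by simp
    also have "\<dots> = x" by (subst dyf_eq[OF H]) (auto simp: hseq_0)
    finally show ?thesis .
  qed
  have g1: "g 1 = y"
  proof -
    have "(1::real) \<in> dyS" unfolding dyS_def by (rule CollectI, rule exI[of _ 0], rule exI[of _ 1]) simp
    hence "g 1 = dyf x y (real 1 / 2^0)" using g(2) by simp
    also have "\<dots> = y" by (subst dyf_eq[OF H]) (auto simp: hseq_top)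
    finally show ?thesis .
  qed
  have lipg: "\<And>s t. s \<in> {0..1} \<Longrightarrow> t \<in> {0..1} \<Longrightarrow> dist (g s) (g t) \<le> ?D * \<bar>s - t\<bar>"
    using lipschitz_onD[OF g(1)] closure_dyS by (simp add: dist_real_def)
  have main: "dist (g s) (g t) = \<bar>s - t\<bar> * ?D" if st: "s \<in> {0..1}" "t \<in> {0..1}" "s \<le> t" for s t
  proof -
    have "?D \<le> dist (g 0) (g s) + dist (g s) (g t) + dist (g t) (g 1)"
    proof -
      have "dist (g 0) (g 1) \<le> dist (g 0) (g s) + dist (g s) (g 1)" by (rule dist_triangle)
      moreover have "dist (g s) (g 1) \<le> dist (g s) (g t) + dist (g t) (g 1)" by (rule dist_triangle)
      ultimately show ?thesis using g0 g1 by simp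
    qed
    moreover have "dist (g 0) (g s) \<le> ?D * s" using lipg[of 0 s] st by simp
    moreover have "dist (g t) (g 1) \<le> ?D * (1 - t)" using lipg[of t 1] st by simp
    moreover have "dist (g s) (g t) \<le> ?D * (t - s)" using lipg[of s t] st by simp
    ultimately have "dist (g s) (g t) \<ge> ?D * (t - s)" by (simp add: algebra_simps)
    then show ?thesis using lipg[of s t] st by (simp add: mult.commute)
  qed
  have "geodesic_between g x y"
    unfolding geodesic_between_def
  proof (intro conjI g0 g1 ballI)
    fix s t :: real assume "s \<in> {0..1}" "t \<in> {0..1}"
    then show "dist (g s) (g t) = \<bar>s - t\<bar> * ?D"
      using main[of s t] main[of t s] by (cases "s \<le> t") (auto simp: dist_commute abs_minus_commute)
  qed
  then show ?thesis by blast
qed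



context
  fixes \<tau> :: "real \<Rightarrow> real"
  assumes S: "\<tau> \<in> S0plus"
begin

lemma tmono: "mono_on {0..} \<tau>" and tconv: "convex_on {0..} \<tau>"
  and tconc: "concave_on {0<..} (deriv \<tau>)" and tpos: "\<And>x. x > 0 \<Longrightarrow> deriv \<tau> x > 0"
  and tdiff: "\<And>x. x > 0 \<Longrightarrow> \<tau> differentiable at x"
  and tlim: "\<exists>l. (deriv \<tau> \<longlongrightarrow> l) (at_right 0)"
  using S unfolding S0plus_def by auto

lemma tder: "x > 0 \<Longrightarrow> (\<tau> has_real_derivative deriv \<tau> x) (at x)"
  using tdiff by (simp add: DERIV_deriv_iff_real_differentiable)

lemma ttangent:
  assumes "x > 0" "y \<ge> 0"
  shows "\<tau> y - \<tau> x \<ge> deriv \<tau> x * (y - x)"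
proof (rule convex_on_imp_above_tangent[OF tconv])
  show "connected {0::real..}" by (simp add: is_interval_connected)
  show "x \<in> interior {0..}" using assms by simp
  show "y \<in> {0..}" using assms by simp
  show "(\<tau> has_real_derivative deriv \<tau> x) (at x within {0..})"
    using tder[OF assms(1)] by (rule has_field_derivative_at_within)
qed

lemma tstrict:
  assumes "0 \<le> a" "a < b"
  shows "\<tau> a < \<tau> b"
proof -
  define c where "c = (a + b) / 2"
  have c: "c > 0" "a \<le> c" "c < b" using assms unfolding c_def by auto
  have "\<tau> b - \<tau> c \<ge> deriv \<tau> c * (b - c)" using ttangent[of c b] c assms by simp
  moreover have "deriv \<tau> c * (b - c) > 0" using tpos[OF c(1)] c by simp
  moreover have "\<tau> a \<le> \<tau> c" using tmono c assms by (auto intro: mono_onD)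
  ultimately show ?thesis by linarith
qed

lemma tdmono:
  assumes "0 < x" "x \<le> y"
  shows "deriv \<tau> x \<le> deriv \<tau> y"
proof -
  have "\<tau> y - \<tau> x \<ge> deriv \<tau> x * (y - x)" using ttangent[of x y] assms by simp
  moreover have "\<tau> x - \<tau> y \<ge> deriv \<tau> y * (x - y)" using ttangent[of y x] assms by simp
  ultimately have "(deriv \<tau> x - deriv \<tau> y) * (y - x) \<le> 0" by (simp add: algebra_simps)
  moreover have "y - x \<ge> 0" using assms by simp
  ultimately show ?thesis
    by (cases "y = x") (auto simp: mult_le_0_iff)
qed

lemma tdouble:
  assumes "0 < x"
  shows "deriv \<tau> (2 * x) \<le> 3 * deriv \<tau> x"
proof -
  have cv: "convex_on {0<..} (\<lambda>z. - deriv \<tau> z)" using tconc by (simp add: concave_on_def)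
  have "- deriv \<tau> ((1 - 1/3) * (x/2) + (1/3) * (2*x)) \<le> (1 - 1/3) * (- deriv \<tau> (x/2)) + (1/3) * (- deriv \<tau> (2*x))"
    using assms convex_onD[OF cv, of "1/3" "x/2" "2*x"] by simp
  moreover have "(1 - 1/3) * (x/2) + (1/3) * (2*x) = x" by simp
  moreover have "deriv \<tau> (x/2) > 0" using tpos assms by simp
  ultimately show ?thesis by simp
qed

definition dp :: "real \<Rightarrow> real" where "dp z = (if z > 0 then deriv \<tau> z else 0)"

lemma dp_nonneg: "dp z \<ge> 0"
  unfolding dp_def using tpos by (auto intro: less_imp_le)

lemma dp_mono: "mono dp"
proof (rule monoI)
  fix u v :: real assume "u \<le> v"
  then show "dp u \<le> dp v" unfolding dp_def using tdmono[of u v] tpos[of v] by auto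
qed

lemma tbound:
  assumes a: "a \<ge> 0" and b: "b \<ge> 0" and c: "\<bar>a - b\<bar> \<le> c"
  shows "\<bar>\<tau> a - \<tau> b\<bar> \<le> 3 * c * (dp b + dp c)"
proof (cases a b rule: linorder_cases)
  case equal
  then show ?thesis using dp_nonneg[of b] dp_nonneg[of c] c by simp
next
  case greater
  have ta: "\<tau> b - \<tau> a \<ge> deriv \<tau> a * (b - a)" using ttangent[of a b] greater b by simp
  have tb: "\<tau> b \<le> \<tau> a" using tmono greater b by (auto intro: mono_onD)
  define mx where "mx = max b c"
  have mxp: "mx > 0" using greater b c unfolding mx_def by auto
  have "deriv \<tau> a \<le> deriv \<tau> (2 * mx)" using greater b c unfolding mx_def by (intro tdmono) auto
  also have "\<dots> \<le> 3 * deriv \<tau> mx" by (rule tdouble[OF mxp])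
  also have "deriv \<tau> mx \<le> dp b + dp c"
    using dp_nonneg[of b] dp_nonneg[of c] mxp unfolding mx_def dp_def by (auto simp: max_def)
  finally have d: "deriv \<tau> a \<le> 3 * (dp b + dp c)" by simp
  have "\<bar>\<tau> a - \<tau> b\<bar> = \<tau> a - \<tau> b" using tb by simp
  also have "\<dots> \<le> deriv \<tau> a * (a - b)" using ta by (simp add: algebra_simps)
  also have "\<dots> \<le> (3 * (dp b + dp c)) * c"
    using d c greater tpos[of a] b by (intro mult_mono) auto
  finally show ?thesis by (simp add: mult_ac)
next
  case less
  have ta: "\<tau> a - \<tau> b \<ge> deriv \<tau> b * (a - b)" using ttangent[of b a] less a by simp
  have tb: "\<tau> a \<le> \<tau> b" using tmono less a by (auto intro: mono_onD)
  have d: "deriv \<tau> b \<le> 3 * (dp b + dp c)"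
    using less a dp_nonneg[of c] tpos[of b] unfolding dp_def by auto
  have "\<bar>\<tau> a - \<tau> b\<bar> = \<tau> b - \<tau> a" using tb by simp
  also have "\<dots> \<le> deriv \<tau> b * (b - a)" using ta by (simp add: algebra_simps)
  also have "\<dots> \<le> (3 * (dp b + dp c)) * c"
    using d c less tpos[of b] a by (intro mult_mono) auto
  finally show ?thesis by (simp add: mult_ac)
qed

lemma tau_deriv_ge_dp: "dp z \<le> tau_deriv \<tau> z"
proof (cases "z > 0")
  case True then show ?thesis by (simp add: dp_def tau_deriv_def)
next
  case False
  obtain l where l: "(deriv \<tau> \<longlongrightarrow> l) (at_right 0)" using tlim by blast
  have "Lim (at_right 0) (deriv \<tau>) = l" using l by (rule tendsto_Lim[rotated]) simp
  moreover have "l \<ge> 0"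
  proof (rule tendsto_lowerbound[OF l])
    show "\<forall>\<^sub>F x in at_right 0. 0 \<le> deriv \<tau> x"
      using tpos by (auto simp: eventually_at_right_less intro: less_imp_le eventually_mono[OF eventually_at_right_less])
  qed simp
  ultimately show ?thesis using False by (simp add: dp_def tau_deriv_def)
qed

lemma tau_max_mono: "mono (\<lambda>z. \<tau> (max 0 z))"
  by (rule monoI) (auto intro!: mono_onD[OF tmono])

end


lemma vimage_set_meas:
  assumes Y: "Y \<in> borel_measurable M" and A: "A \<in> sets borel"
  shows "{\<omega>\<in>space M. Y \<omega> \<in> A} \<in> sets M"
proof -
  have "{\<omega>\<in>space M. Y \<omega> \<in> A} = Y -` A \<inter> space M" by auto
  then show ?thesis using measurable_sets[OF Y A] by simp
qed

lemma AE_not_in_if_null: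
  assumes P: "prob_space M" and Y: "Y \<in> borel_measurable M" and A: "A \<in> sets borel"
    and m: "measure M {\<omega>\<in>space M. Y \<omega> \<in> A} = 0"
  shows "AE \<omega> in M. Y \<omega> \<notin> A"
proof -
  interpret prob_space M by (rule P)
  have S: "{\<omega>\<in>space M. Y \<omega> \<in> A} \<in> sets M" by (rule vimage_set_meas[OF Y A])
  show ?thesis
    by (subst AE_iff_measurable[OF S]) (auto simp: emeasure_eq_measure m)
qed

lemma null_if_AE_not_in:
  assumes P: "prob_space M" and Y: "Y \<in> borel_measurable M" and A: "A \<in> sets borel"
    and ae: "AE \<omega> in M. Y \<omega> \<notin> A"
  shows "measure M {\<omega>\<in>space M. Y \<omega> \<in> A} = 0"
proof -
  interpret prob_space M by (rule P)
  have S: "{\<omega>\<in>space M. Y \<omega> \<in> A} \<in> sets M" by (rule vimage_set_meas[OF Y A])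
  have "emeasure M {\<omega>\<in>space M. Y \<omega> \<in> A} = 0"
    using ae by (subst (asm) AE_iff_measurable[OF S]) auto
  then show ?thesis by (simp add: emeasure_eq_measure)
qed

lemma supp_pos:
  assumes P: "prob_space M" and Y: "Y \<in> borel_measurable M"
    and z: "z \<in> rv_support M Y" and U: "open U" "z \<in> U"
    and ae: "AE \<omega> in M. Y \<omega> \<notin> U"
  shows False
proof -
  interpret prob_space M by (rule P)
  have S: "{\<omega>\<in>space M. Y \<omega> \<in> U} \<in> sets M" using vimage_set_meas[OF Y] U by auto
  have m0: "measure M {\<omega>\<in>space M. Y \<omega> \<in> U} = 0"
    using null_if_AE_not_in[OF P Y _ ae] U by auto
  have "{\<omega>\<in>space M. Y \<omega> \<in> - U} = space M - {\<omega>\<in>space M. Y \<omega> \<in> U}" by auto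
  hence "measure M {\<omega>\<in>space M. Y \<omega> \<in> - U} = 1" using prob_compl[OF S] m0 by simp
  moreover have "closed (- U)" using U by auto
  ultimately have "rv_support M Y \<subseteq> - U" unfolding rv_support_def by blast
  then show False using z U by auto
qed

lemma supp_full:
  fixes Y :: "'b \<Rightarrow> 'a::metric_space"
  assumes P: "prob_space M" and Y: "Y \<in> borel_measurable M" and sep: "separable_space TYPE('a)"
  shows "AE \<omega> in M. Y \<omega> \<in> rv_support M Y"
proof -
  interpret prob_space M by (rule P)
  obtain D0 :: "'a set" where D0: "countable D0" "closure D0 = UNIV"
    using sep unfolding separable_space_def by blast
  define I where "I = {(d, n). d \<in> D0 \<and> measure M {\<omega>\<in>space M. Y \<omega> \<in> ball d (1 / Suc n)} = 0}"
  have cI: "countable I"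
    by (rule countable_subset[of _ "D0 \<times> UNIV"]) (auto simp: I_def D0(1))
  have "AE \<omega> in M. \<forall>p\<in>I. Y \<omega> \<notin> ball (fst p) (1 / Suc (snd p))"
  proof (rule AE_ball_countable'[OF _ cI])
    fix p assume "p \<in> I"
    then show "AE \<omega> in M. Y \<omega> \<notin> ball (fst p) (1 / Suc (snd p))"
      by (intro AE_not_in_if_null[OF P Y]) (auto simp: I_def)
  qed
  then show ?thesis
  proof (rule eventually_mono)
    fix \<omega> assume H: "\<forall>p\<in>I. Y \<omega> \<notin> ball (fst p) (1 / Suc (snd p))"
    show "Y \<omega> \<in> rv_support M Y"
    proof (rule ccontr)
      let ?y = "Y \<omega>"
      assume "?y \<notin> rv_support M Y"
      then obtain C where C: "closed C" "measure M {\<omega>\<in>space M. Y \<omega> \<in> C} = 1" "?y \<notin> C"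
        unfolding rv_support_def by blast
      obtain r where r: "r > 0" "ball ?y r \<subseteq> - C"
        using C(1,3) open_contains_ball[of "- C"] by auto
      obtain n where n: "inverse (real (Suc n)) < r / 2" using r(1)
        by (metis half_gt_zero reals_Archimedean)
      have inp: "1 / real (Suc n) > 0" by simp
      have "\<exists>d\<in>D0. dist d ?y < 1 / real (Suc n)"
        using D0(2) closure_approachable[of ?y D0] inp by blast
      then obtain d where d: "d \<in> D0" "dist d ?y < 1 / real (Suc n)" by blast
      have yin: "?y \<in> ball d (1 / real (Suc n))" using d by simp
      have sub: "ball d (1 / real (Suc n)) \<subseteq> - C"
      proof
        fix z assume "z \<in> ball d (1 / real (Suc n))"
        hence "dist ?y z < 2 / real (Suc n)" using d dist_triangle3[of ?y z d] by (simp add: dist_commute)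
        also have "\<dots> < r" using n by (simp add: field_simps)
        finally show "z \<in> - C" using r by auto
      qed
      have S1: "{\<omega>\<in>space M. Y \<omega> \<in> C} \<in> sets M" using vimage_set_meas[OF Y] C(1) by auto
      have "measure M {\<omega>\<in>space M. Y \<omega> \<in> ball d (1 / real (Suc n))} \<le> measure M (space M - {\<omega>\<in>space M. Y \<omega> \<in> C})"
        using sub S1 by (intro finite_measure_mono) auto
      also have "\<dots> = 0" using prob_compl[OF S1] C(2) by simp
      finally have "(d, n) \<in> I" using d(1) unfolding I_def by (simp add: measure_nonneg antisym)
      then show False using H yin by auto
    qed
  qed
qed

lemma pos_integral:
  fixes f :: "'b \<Rightarrow> real"
  assumes P: "prob_space M" and f: "integrable M f" and pos: "AE x in M. f x > 0"
  shows "integral\<^sup>L M f > 0"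
proof -
  have nn: "AE x in M. 0 \<le> f x" using pos by (rule eventually_mono) auto
  have ge: "integral\<^sup>L M f \<ge> 0" using nn by (rule integral_nonneg_AE)
  have "integral\<^sup>L M f \<noteq> 0"
  proof
    assume "integral\<^sup>L M f = 0"
    hence "AE x in M. f x = 0" using integral_nonneg_eq_0_iff_AE[OF f nn] by simp
    with pos have "AE x in M. False" by eventually_elim auto
    then show False using prob_space.AE_False[OF P] by simp
  qed
  then show ?thesis using ge by simp
qed


theorem mainTheorem12:
  fixes M :: "'b measure" and Y :: "'b \<Rightarrow> 'a::complete_space"
    and o' :: 'a and \<tau> :: "real \<Rightarrow> real"
  assumes "hadamard_space TYPE('a)"
    and "separable_space TYPE('a)"
    and "prob_space M"
    and "Y \<in> borel_measurable M"
    and "\<tau> \<in> S0plus"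
    and "(\<integral>\<^sup>+\<omega>. ennreal (tau_deriv \<tau> (dist (Y \<omega>) o')) \<partial>M) < \<infinity>"
    and "geodesically_convex (rv_support M Y)"
  shows "\<forall>m1 m2. is_tau_frechet_mean M Y \<tau> o' m1 \<and> is_tau_frechet_mean M Y \<tau> o' m2
           \<longrightarrow> m1 = m2"
proof (intro allI impI)
  note H = assms(1) and sep = assms(2) and P = assms(3) and Ym = assms(4) and S = assms(5)
    and fin = assms(6) and cvx = assms(7)
  interpret prob_space M by (rule P)
  fix m1 m2 assume mm: "is_tau_frechet_mean M Y \<tau> o' m1 \<and> is_tau_frechet_mean M Y \<tau> o' m2"
  define Z where "Z q \<omega> = \<tau> (dist (Y \<omega>) q) - \<tau> (dist (Y \<omega>) o')" for q \<omega>
  define F where "F q = integral\<^sup>L M (Z q)" for q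
  have Fm1: "F m1 \<le> F q" and Fm2: "F m2 \<le> F q" for q
    using mm unfolding is_tau_frechet_mean_def frechet_obj_def F_def Z_def by auto
  have dmeas: "(\<lambda>\<omega>. dist (Y \<omega>) q) \<in> borel_measurable M" for q
    by (rule measurable_compose[OF Ym borel_measurable_continuous_onI])
       (intro continuous_intros)
  have tmeas: "(\<lambda>\<omega>. \<tau> (dist (Y \<omega>) q)) \<in> borel_measurable M" for q
  proof -
    have "(\<lambda>\<omega>. \<tau> (max 0 (dist (Y \<omega>) q))) \<in> borel_measurable M"
      by (rule measurable_compose[OF dmeas borel_measurable_mono[OF tau_max_mono[OF S]]])
    then show ?thesis by simp
  qed
  have dpint: "integrable M (\<lambda>\<omega>. dp \<tau> (dist (Y \<omega>) o'))"
  proof (rule integrableI_bounded)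
    show "(\<lambda>\<omega>. dp \<tau> (dist (Y \<omega>) o')) \<in> borel_measurable M"
      by (rule measurable_compose[OF dmeas borel_measurable_mono[OF dp_mono[OF S]]])
    have "(\<integral>\<^sup>+\<omega>. ennreal (norm (dp \<tau> (dist (Y \<omega>) o'))) \<partial>M)
        \<le> (\<integral>\<^sup>+\<omega>. ennreal (tau_deriv \<tau> (dist (Y \<omega>) o')) \<partial>M)"
      using dp_nonneg[OF S] tau_deriv_ge_dp[OF S] by (intro nn_integral_mono) (simp add: ennreal_leI)
    then show "(\<integral>\<^sup>+\<omega>. ennreal (norm (dp \<tau> (dist (Y \<omega>) o'))) \<partial>M) < \<infinity>"
      using fin by (rule le_less_trans)
  qed
  have Zint: "integrable M (Z q)" for q
  proof -
    let ?c = "dist q o'"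
    have i1: "integrable M (\<lambda>\<omega>. 3 * ?c * (dp \<tau> (dist (Y \<omega>) o') + dp \<tau> ?c))"
      using dpint by (intro integrable_mult_right integrable_add integrable_const) auto
    have i2: "Z q \<in> borel_measurable M" unfolding Z_def using tmeas by measurable
    have i3: "AE \<omega> in M. norm (Z q \<omega>) \<le> norm (3 * ?c * (dp \<tau> (dist (Y \<omega>) o') + dp \<tau> ?c))"
    proof (rule AE_I2)
      fix \<omega>
      have tri: "\<bar>dist (Y \<omega>) q - dist (Y \<omega>) o'\<bar> \<le> ?c"
        using dist_triangle[of "Y \<omega>" q o'] dist_triangle[of "Y \<omega>" o' q] by (simp add: dist_commute abs_le_iff)
      have "\<bar>Z q \<omega>\<bar> \<le> 3 * ?c * (dp \<tau> (dist (Y \<omega>) o') + dp \<tau> ?c)"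
        unfolding Z_def by (rule tbound[OF S zero_le_dist zero_le_dist tri])
      moreover have "0 \<le> 3 * ?c * (dp \<tau> (dist (Y \<omega>) o') + dp \<tau> ?c)"
        using dp_nonneg[OF S] by simp
      ultimately show "norm (Z q \<omega>) \<le> norm (3 * ?c * (dp \<tau> (dist (Y \<omega>) o') + dp \<tau> ?c))" by simp
    qed
    show ?thesis by (rule Bochner_Integration.integrable_bound[OF i1 i2 i3])
  qed
  show "m1 = m2"
  proof (rule ccontr)
    assume ne: "m1 \<noteq> m2"
    define D where "D = dist m1 m2"
    have Dp: "D > 0" using ne unfolding D_def by simp
    obtain m where hm: "\<And>q. (1/2) * (dist m1 q)^2 + (1/2) * (dist m2 q)^2 - (1/4) * (dist m1 m2)^2 \<ge> (dist q m)^2"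
      using H unfolding hadamard_space_def by blast
    have key: "dist y m \<le> (dist y m1 + dist y m2) / 2 \<and>
        (\<bar>dist y m1 - dist y m2\<bar> < D \<longrightarrow> dist y m < (dist y m1 + dist y m2) / 2)" for y
    proof -
      define a where "a = dist y m1"
      define b where "b = dist y m2"
      have ab: "a \<ge> 0" "b \<ge> 0" unfolding a_def b_def by auto
      have h: "(dist y m)^2 \<le> (a^2 + b^2)/2 - D^2/4"
        using hm[of y] unfolding a_def b_def D_def by (simp add: dist_commute add_divide_distrib)
      have tr: "\<bar>a - b\<bar> \<le> D" unfolding a_def b_def D_def
        using dist_triangle[of m1 y m2] dist_triangle[of m2 y m1] by (simp add: dist_commute abs_le_iff)
      have "(a - b)^2 \<le> D^2" using tr
        by (metis abs_ge_zero power2_abs power_mono)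
      hence "(dist y m)^2 \<le> ((a + b)/2)^2" using h by (simp add: power2_eq_square field_simps)
      hence 1: "dist y m \<le> (a + b)/2" by (rule power2_le_imp_le) (use ab in simp)
      have 2: "dist y m < (a + b)/2" if lt: "\<bar>a - b\<bar> < D"
      proof -
        have "(a - b)^2 < D^2" using lt
          by (metis abs_ge_zero power2_abs power_strict_mono zero_less_numeral)
        hence "(dist y m)^2 < ((a + b)/2)^2" using h by (simp add: power2_eq_square field_simps)
        then show ?thesis by (rule power_less_imp_less_base) (use ab in simp)
      qed
      show ?thesis using 1 2 unfolding a_def b_def by blast
    qed
    define W where "W \<omega> = (1/2) * Z m1 \<omega> + (1/2) * Z m2 \<omega> - Z m \<omega>" for \<omega>
    have Wint: "integrable M W" unfolding W_def using Zint by auto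
    have Wval: "W \<omega> = (\<tau> (dist (Y \<omega>) m1) + \<tau> (dist (Y \<omega>) m2)) / 2 - \<tau> (dist (Y \<omega>) m)" for \<omega>
      unfolding W_def Z_def by (simp add: field_simps)
    have Wpt: "W \<omega> \<ge> 0 \<and> (\<bar>dist (Y \<omega>) m1 - dist (Y \<omega>) m2\<bar> < D \<longrightarrow> W \<omega> > 0)" for \<omega>
    proof -
      let ?a = "dist (Y \<omega>) m1" and ?b = "dist (Y \<omega>) m2" and ?d = "dist (Y \<omega>) m"
      have cv: "\<tau> ((1 - 1/2) * ?a + (1/2) * ?b) \<le> (1 - 1/2) * \<tau> ?a + (1/2) * \<tau> ?b"
        using convex_onD[OF tconv[OF S], of "1/2" ?a ?b] by simp
      have cv': "\<tau> ((?a + ?b)/2) \<le> (\<tau> ?a + \<tau> ?b) / 2"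
        using cv by (simp add: field_simps)
      have mo: "\<tau> ?d \<le> \<tau> ((?a + ?b)/2)"
        using key[of "Y \<omega>"] by (intro mono_onD[OF tmono[OF S]]) auto
      have st: "\<tau> ?d < \<tau> ((?a + ?b)/2)" if "\<bar>?a - ?b\<bar> < D"
        using key[of "Y \<omega>"] that by (intro tstrict[OF S]) auto
      show ?thesis using cv' mo st unfolding Wval by auto
    qed
    have "integral\<^sup>L M W = (1/2) * F m1 + (1/2) * F m2 - F m"
      unfolding W_def F_def using Zint by simp
    also have "\<dots> \<le> 0" using Fm1[of m] Fm2[of m] by simp
    finally have Wle: "integral\<^sup>L M W \<le> 0" .
    have Wae: "AE \<omega> in M. \<not> (\<bar>dist (Y \<omega>) m1 - dist (Y \<omega>) m2\<bar> < D)"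
    proof -
      have "integral\<^sup>L M W = 0" using Wle integral_nonneg_AE[of W M] Wpt by (simp add: antisym)
      hence "AE \<omega> in M. W \<omega> = 0" using integral_nonneg_eq_0_iff_AE[OF Wint] Wpt by simp
      then show ?thesis by (rule eventually_mono) (use Wpt in force)
    qed
    define B1 where "B1 = {y. dist y m2 - dist y m1 \<ge> D}"
    define B2 where "B2 = {y. dist y m1 - dist y m2 \<ge> D}"
    have B12: "AE \<omega> in M. Y \<omega> \<in> B1 \<or> Y \<omega> \<in> B2"
      using Wae by (rule eventually_mono) (auto simp: B1_def B2_def)
    have supp: "AE \<omega> in M. Y \<omega> \<in> rv_support M Y" by (rule supp_full[OF P Ym sep])
    have notB1: "\<not> (AE \<omega> in M. Y \<omega> \<in> B1)"
    proof
      assume ae: "AE \<omega> in M. Y \<omega> \<in> B1"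
      have "AE \<omega> in M. Z m2 \<omega> - Z m1 \<omega> > 0"
        using ae
      proof (rule eventually_mono)
        fix \<omega> assume "Y \<omega> \<in> B1"
        hence "dist (Y \<omega>) m1 < dist (Y \<omega>) m2" using Dp unfolding B1_def by simp
        hence "\<tau> (dist (Y \<omega>) m1) < \<tau> (dist (Y \<omega>) m2)" by (intro tstrict[OF S]) auto
        then show "Z m2 \<omega> - Z m1 \<omega> > 0" unfolding Z_def by simp
      qed
      hence "integral\<^sup>L M (\<lambda>\<omega>. Z m2 \<omega> - Z m1 \<omega>) > 0" using Zint by (intro pos_integral[OF P]) auto
      hence "F m2 - F m1 > 0" unfolding F_def using Zint by simp
      then show False using Fm2[of m1] by simp
    qed
    have notB2: "\<not> (AE \<omega> in M. Y \<omega> \<in> B2)"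
    proof
      assume ae: "AE \<omega> in M. Y \<omega> \<in> B2"
      have "AE \<omega> in M. Z m1 \<omega> - Z m2 \<omega> > 0"
        using ae
      proof (rule eventually_mono)
        fix \<omega> assume "Y \<omega> \<in> B2"
        hence "dist (Y \<omega>) m2 < dist (Y \<omega>) m1" using Dp unfolding B2_def by simp
        hence "\<tau> (dist (Y \<omega>) m2) < \<tau> (dist (Y \<omega>) m1)" by (intro tstrict[OF S]) auto
        then show "Z m1 \<omega> - Z m2 \<omega> > 0" unfolding Z_def by simp
      qed
      hence "integral\<^sup>L M (\<lambda>\<omega>. Z m1 \<omega> - Z m2 \<omega>) > 0" using Zint by (intro pos_integral[OF P]) auto
      hence "F m1 - F m2 > 0" unfolding F_def using Zint by simp
      then show False using Fm1[of m2] by simp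
    qed
    obtain y1 where y1: "y1 \<in> rv_support M Y" "y1 \<in> B1"
    proof -
      have "\<exists>y\<in>rv_support M Y. y \<in> B1"
      proof (rule ccontr)
        assume nx: "\<not> ?thesis"
        from supp B12 have "AE \<omega> in M. Y \<omega> \<in> B2" by eventually_elim (use nx in auto)
        then show False using notB2 by simp
      qed
      then show ?thesis using that by blast
    qed
    obtain y2 where y2: "y2 \<in> rv_support M Y" "y2 \<in> B2"
    proof -
      have "\<exists>y\<in>rv_support M Y. y \<in> B2"
      proof (rule ccontr)
        assume nx: "\<not> ?thesis"
        from supp B12 have "AE \<omega> in M. Y \<omega> \<in> B1" by eventually_elim (use nx in auto)
        then show False using notB1 by simp
      qed
      then show ?thesis using that by blast
    qed
    obtain g where g: "geodesic_between g y1 y2" using geodesic_exists[OF H] by blast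
    have gsub: "g ` {0..1} \<subseteq> rv_support M Y" using cvx y1 y2 g unfolding geodesically_convex_def by blast
    have gl: "(dist y1 y2)-lipschitz_on {0..1} g"
      using g unfolding geodesic_between_def by (intro lipschitz_onI) (auto simp: dist_real_def mult.commute)
    have gc: "continuous_on {0..1} g" by (rule lipschitz_on_continuous_on[OF gl])
    define \<phi> where "\<phi> t = dist (g t) m2 - dist (g t) m1" for t
    have \<phi>c: "continuous_on {0..1} \<phi>" unfolding \<phi>_def
      by (intro continuous_on_diff continuous_on_dist gc continuous_on_const)
    have \<phi>0: "\<phi> 0 \<ge> 0" using y1 g Dp unfolding \<phi>_def B1_def geodesic_between_def by auto
    have \<phi>1: "\<phi> 1 \<le> 0" using y2 g Dp unfolding \<phi>_def B2_def geodesic_between_def by auto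
    obtain t where t: "0 \<le> t" "t \<le> 1" "\<phi> t = 0" using IVT2'[of \<phi> 1 0 0, OF \<phi>1 \<phi>0 _ \<phi>c] by auto
    have zs: "g t \<in> rv_support M Y" using gsub t by auto
    define G where "G = {y. \<bar>dist y m1 - dist y m2\<bar> < D}"
    have Go: "open G" unfolding G_def by (intro open_Collect_less continuous_intros)
    have zG: "g t \<in> G" using t Dp unfolding G_def \<phi>_def by simp
    have "AE \<omega> in M. Y \<omega> \<notin> G" using Wae unfolding G_def by simp
    then show False by (rule supp_pos[OF P Ym zs Go zG, rotated -1])
  qed
qed


end
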